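(* Let $T$ be a pre-truss and let $P$ be a non-empty normal sub-heap of $T$. Let $\pi:T\to T/P$ be the canonical heap epimorphism onto the quotient heap by the sub-heap relation $\sim_P$. Then $\pi$ is a homomorphism of pre-trusses (that is, $\sim_P$ is compatible with the multiplication of $T$, so that $T/P$ carries an associative multiplication $\pi(a)\pi(b)=\pi(ab)$ making $\pi$ a pre-truss homomorphism) if and only if $P$ is a paragon.
   Context: A heap is a set $H$ with a ternary operation $[-,-,-]$ such that $[a_1,a_2,[a_3,a_4,a_5]]=[[a_1,a_2,a_3],a_4,a_5]$ and $[a,a,b]=b=[b,a,a]$ for all elements. A sub-heap is a subset closed under $[-,-,-]$. A normal sub-heap is a non-empty sub-heap $S$ such that $[[a,e,s],a,e]\in S$ for all $a\in H$, $e,s\in S$. For a non-empty sub-heap $S$, the relation $a\sim_S b$ holds iff there exists $s\in S$ with $[a,b,s]\in S$ (equivalently, for all $s\in S$); it is an equivalence relation, and for normal $S$ it is a heap congruence, giving the quotient heap $H/S$ and the canonical heap epimorphism $\pi$. A pre-truss is a heap $T$ together with an associative binary operation (written by juxtaposition); a homomorphism of pre-trusses is a map that is both a heap homomorphism and a semigroup homomorphism. A sub-heap $S$ of a pre-truss $T$ is left-closed if $[ts',ts,s]\in S$ for all $s,s'\in S$, $t\in T$; right-closed if $[s't,st,s]\in S$ for all $s,s'\in S$, $t\in T$; closed if both. A paragon is a non-empty normal sub-heap $P$ of $T$ such that every equivalence class of $\sim_P$ is a closed sub-heap of $T$. *)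

theory Defs
  imports Main
begin

definition heap :: "'a set \<Rightarrow> ('a \<Rightarrow> 'a \<Rightarrow> 'a \<Rightarrow> 'a) \<Rightarrow> bool" where
  "heap H h \<longleftrightarrow>
     (\<forall>a\<in>H. \<forall>b\<in>H. \<forall>c\<in>H. h a b c \<in> H) \<and>
     (\<forall>a1\<in>H. \<forall>a2\<in>H. \<forall>a3\<in>H. \<forall>a4\<in>H. \<forall>a5\<in>H.
        h a1 a2 (h a3 a4 a5) = h (h a1 a2 a3) a4 a5) \<and>
     (\<forall>a\<in>H. \<forall>b\<in>H. h a a b = b \<and> h b a a = b)"

definition pre_truss :: "'a set \<Rightarrow> ('a \<Rightarrow> 'a \<Rightarrow> 'a \<Rightarrow> 'a) \<Rightarrow> ('a \<Rightarrow> 'a \<Rightarrow> 'a) \<Rightarrow> bool" where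
  "pre_truss T h m \<longleftrightarrow> heap T h \<and>
     (\<forall>a\<in>T. \<forall>b\<in>T. m a b \<in> T) \<and>
     (\<forall>a\<in>T. \<forall>b\<in>T. \<forall>c\<in>T. m (m a b) c = m a (m b c))"

definition heap_hom :: "'a set \<Rightarrow> ('a \<Rightarrow> 'a \<Rightarrow> 'a \<Rightarrow> 'a) \<Rightarrow> 'b set \<Rightarrow> ('b \<Rightarrow> 'b \<Rightarrow> 'b \<Rightarrow> 'b)
    \<Rightarrow> ('a \<Rightarrow> 'b) \<Rightarrow> bool" where
  "heap_hom H h H' h' f \<longleftrightarrow> (\<forall>a\<in>H. f a \<in> H') \<and>
     (\<forall>a\<in>H. \<forall>b\<in>H. \<forall>c\<in>H. f (h a b c) = h' (f a) (f b) (f c))"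

definition pre_truss_hom :: "'a set \<Rightarrow> ('a \<Rightarrow> 'a \<Rightarrow> 'a \<Rightarrow> 'a) \<Rightarrow> ('a \<Rightarrow> 'a \<Rightarrow> 'a)
    \<Rightarrow> 'b set \<Rightarrow> ('b \<Rightarrow> 'b \<Rightarrow> 'b \<Rightarrow> 'b) \<Rightarrow> ('b \<Rightarrow> 'b \<Rightarrow> 'b) \<Rightarrow> ('a \<Rightarrow> 'b) \<Rightarrow> bool" where
  "pre_truss_hom T h m T' h' m' f \<longleftrightarrow> heap_hom T h T' h' f \<and>
     (\<forall>a\<in>T. \<forall>b\<in>T. f (m a b) = m' (f a) (f b))"

definition sub_heap :: "'a set \<Rightarrow> ('a \<Rightarrow> 'a \<Rightarrow> 'a \<Rightarrow> 'a) \<Rightarrow> 'a set \<Rightarrow> bool" where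
  "sub_heap H h S \<longleftrightarrow> S \<subseteq> H \<and> (\<forall>a\<in>S. \<forall>b\<in>S. \<forall>c\<in>S. h a b c \<in> S)"

definition normal_sub_heap :: "'a set \<Rightarrow> ('a \<Rightarrow> 'a \<Rightarrow> 'a \<Rightarrow> 'a) \<Rightarrow> 'a set \<Rightarrow> bool" where
  "normal_sub_heap H h S \<longleftrightarrow> S \<noteq> {} \<and> sub_heap H h S \<and>
     (\<forall>a\<in>H. \<forall>e\<in>S. \<forall>s\<in>S. h (h a e s) a e \<in> S)"

definition sh_rel :: "'a set \<Rightarrow> ('a \<Rightarrow> 'a \<Rightarrow> 'a \<Rightarrow> 'a) \<Rightarrow> 'a set \<Rightarrow> 'a \<Rightarrow> 'a \<Rightarrow> bool" where
  "sh_rel H h S a b \<longleftrightarrow> a \<in> H \<and> b \<in> H \<and> (\<exists>s\<in>S. h a b s \<in> S)"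

definition canon :: "'a set \<Rightarrow> ('a \<Rightarrow> 'a \<Rightarrow> 'a \<Rightarrow> 'a) \<Rightarrow> 'a set \<Rightarrow> 'a \<Rightarrow> 'a set" where
  "canon H h S a = {b \<in> H. sh_rel H h S a b}"

definition quot :: "'a set \<Rightarrow> ('a \<Rightarrow> 'a \<Rightarrow> 'a \<Rightarrow> 'a) \<Rightarrow> 'a set \<Rightarrow> 'a set set" where
  "quot H h S = canon H h S ` H"

(* induced heap operation on H/S (well defined for normal S), via representatives *)
definition quot_op :: "'a set \<Rightarrow> ('a \<Rightarrow> 'a \<Rightarrow> 'a \<Rightarrow> 'a) \<Rightarrow> 'a set
    \<Rightarrow> 'a set \<Rightarrow> 'a set \<Rightarrow> 'a set \<Rightarrow> 'a set" where
  "quot_op H h S X Y Z =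
     canon H h S (h (SOME x. x \<in> X) (SOME y. y \<in> Y) (SOME z. z \<in> Z))"

definition left_closed :: "'a set \<Rightarrow> ('a \<Rightarrow> 'a \<Rightarrow> 'a \<Rightarrow> 'a) \<Rightarrow> ('a \<Rightarrow> 'a \<Rightarrow> 'a) \<Rightarrow> 'a set \<Rightarrow> bool" where
  "left_closed T h m S \<longleftrightarrow> (\<forall>s\<in>S. \<forall>s'\<in>S. \<forall>t\<in>T. h (m t s') (m t s) s \<in> S)"

definition right_closed :: "'a set \<Rightarrow> ('a \<Rightarrow> 'a \<Rightarrow> 'a \<Rightarrow> 'a) \<Rightarrow> ('a \<Rightarrow> 'a \<Rightarrow> 'a) \<Rightarrow> 'a set \<Rightarrow> bool" where
  "right_closed T h m S \<longleftrightarrow> (\<forall>s\<in>S. \<forall>s'\<in>S. \<forall>t\<in>T. h (m s' t) (m s t) s \<in> S)"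

definition closed_sub_heap :: "'a set \<Rightarrow> ('a \<Rightarrow> 'a \<Rightarrow> 'a \<Rightarrow> 'a) \<Rightarrow> ('a \<Rightarrow> 'a \<Rightarrow> 'a) \<Rightarrow> 'a set \<Rightarrow> bool" where
  "closed_sub_heap T h m S \<longleftrightarrow> sub_heap T h S \<and> left_closed T h m S \<and> right_closed T h m S"

definition paragon :: "'a set \<Rightarrow> ('a \<Rightarrow> 'a \<Rightarrow> 'a \<Rightarrow> 'a) \<Rightarrow> ('a \<Rightarrow> 'a \<Rightarrow> 'a) \<Rightarrow> 'a set \<Rightarrow> bool" where
  "paragon T h m P \<longleftrightarrow> normal_sub_heap T h P \<and>
     (\<forall>a\<in>T. closed_sub_heap T h m (canon T h P a))"

end

theory Submission imports Defs begin
locale hp = fixes H :: "'a set" and h assumes hp: "heap H h"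
begin
lemma cl[simp]: "a\<in>H \<Longrightarrow> b\<in>H \<Longrightarrow> c\<in>H \<Longrightarrow> h a b c \<in> H"
  using hp unfolding heap_def by blast
lemma as: "a1\<in>H \<Longrightarrow> a2\<in>H \<Longrightarrow> a3\<in>H \<Longrightarrow> a4\<in>H \<Longrightarrow> a5\<in>H \<Longrightarrow> h a1 a2 (h a3 a4 a5) = h (h a1 a2 a3) a4 a5"
  using hp unfolding heap_def by blast
lemma l[simp]: "a\<in>H \<Longrightarrow> b\<in>H \<Longrightarrow> h a a b = b"
  using hp unfolding heap_def by blast
lemma r[simp]: "a\<in>H \<Longrightarrow> b\<in>H \<Longrightarrow> h b a a = b"
  using hp unfolding heap_def by blast
lemma canc[simp]: "X\<in>H \<Longrightarrow> y\<in>H \<Longrightarrow> c\<in>H \<Longrightarrow> w\<in>H \<Longrightarrow> h (h X y c) c w = h X y w"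
  by (metis as l)
lemma D2: assumes "a\<in>H" "b\<in>H" "c\<in>H" "d\<in>H" "e\<in>H"
  shows "h a (h b c d) e = h (h a d c) b e"
proof -
  have "h (h a d c) b e = h (h a d c) b (h (h b c d) (h b c d) e)" using assms by simp
  also have "\<dots> = h (h (h a d c) b (h b c d)) (h b c d) e" using assms by (simp only: as cl)
  also have "h (h a d c) b (h b c d) = a" using assms by (metis as l r cl)
  finally show ?thesis by simp
qed
lemmas norm = as D2
end

locale nsh = hp + fixes S assumes ns: "normal_sub_heap H h S"
begin
abbreviation "rel \<equiv> sh_rel H h S"
lemma SH: "S \<subseteq> H" using ns unfolding normal_sub_heap_def sub_heap_def by blast
lemma Scl: "a\<in>S \<Longrightarrow> b\<in>S \<Longrightarrow> c\<in>S \<Longrightarrow> h a b c \<in> S"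
  using ns unfolding normal_sub_heap_def sub_heap_def by blast
lemma Sne: "\<exists>s. s \<in> S" using ns unfolding normal_sub_heap_def by blast
lemma Snorm: "a\<in>H \<Longrightarrow> e\<in>S \<Longrightarrow> s\<in>S \<Longrightarrow> h (h a e s) a e \<in> S"
  using ns unfolding normal_sub_heap_def by blast
lemma SH': "s \<in> S \<Longrightarrow> s \<in> H" using SH by blast

lemma rel_any: assumes "rel a b" "s\<in>S" shows "h a b s \<in> S"
proof -
  obtain s0 where s0: "s0\<in>S" "h a b s0 \<in> S" "a\<in>H" "b\<in>H" using assms unfolding sh_rel_def by blast
  have m: "h (h a b s0) s0 s \<in> S" by (rule Scl[OF s0(2) s0(1) assms(2)])
  have "h (h a b s0) s0 s = h a b s" using s0(3,4) SH'[OF s0(1)] SH'[OF assms(2)] by (rule canc)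
  with m show ?thesis by simp
qed
lemma rel_I: "a\<in>H \<Longrightarrow> b\<in>H \<Longrightarrow> s\<in>S \<Longrightarrow> h a b s \<in> S \<Longrightarrow> rel a b"
  unfolding sh_rel_def by blast
lemma rel_H: "rel a b \<Longrightarrow> a \<in> H \<and> b \<in> H" unfolding sh_rel_def by blast
lemma rel_refl: assumes "a\<in>H" shows "rel a a"
proof -
  obtain s where s: "s\<in>S" using Sne by blast
  have "h a a s \<in> S" using l[OF assms SH'[OF s]] s by simp
  then show ?thesis by (rule rel_I[OF assms assms s])
qed
lemma rel_sym: assumes "rel a b" shows "rel b a"
proof -
  obtain s where s: "s\<in>S" using Sne by blast
  have ab: "a\<in>H" "b\<in>H" using rel_H assms by auto
  have m: "h s (h a b s) s \<in> S" by (rule Scl[OF s rel_any[OF assms s] s])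
  have "h s (h a b s) s = h b a s" using ab SH'[OF s] by (simp add: norm)
  with m have "h b a s \<in> S" by simp
  then show ?thesis by (rule rel_I[OF ab(2) ab(1) s])
qed
lemma rel_trans: assumes "rel a b" "rel b c" shows "rel a c"
proof -
  obtain s where s: "s\<in>S" using Sne by blast
  have ab: "a\<in>H" "b\<in>H" "c\<in>H" using rel_H assms by auto
  have m: "h (h a b s) s (h b c s) \<in> S" by (rule Scl[OF rel_any[OF assms(1) s] s rel_any[OF assms(2) s]])
  have "h (h a b s) s (h b c s) = h a c s" using ab SH'[OF s] by (simp add: norm)
  with m have "h a c s \<in> S" by simp
  then show ?thesis by (rule rel_I[OF ab(1) ab(3) s])
qed
lemma mem_canon: "b \<in> canon H h S a \<longleftrightarrow> rel a b"
  unfolding canon_def sh_rel_def by blast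
lemma canon_eq: assumes "rel a b" shows "canon H h S a = canon H h S b"
proof (rule set_eqI)
  fix x show "x \<in> canon H h S a \<longleftrightarrow> x \<in> canon H h S b"
    unfolding mem_canon using rel_trans[OF rel_sym[OF assms], of x] rel_trans[OF assms, of x] by blast
qed
lemma canon_eq_iff: assumes "a \<in> H" shows "canon H h S a = canon H h S b \<longleftrightarrow> rel a b"
proof
  assume eq: "canon H h S a = canon H h S b"
  have "a \<in> canon H h S a" using rel_refl[OF assms] unfolding mem_canon .
  then have "rel b a" unfolding eq mem_canon .
  then show "rel a b" by (rule rel_sym)
qed (rule canon_eq)

lemma comp1: assumes "rel a a'" "b\<in>H" "c\<in>H" shows "rel (h a b c) (h a' b c)"
proof -
  obtain s where s: "s\<in>S" using Sne by blast
  have sH: "s\<in>H" using s SH by blast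
  have ab: "a\<in>H" "a'\<in>H" using rel_H assms by auto
  have eq: "h (h a b c) (h a' b c) s = h a a' s" using ab assms(2,3) sH by (simp add: norm)
  have "h (h a b c) (h a' b c) s \<in> S" unfolding eq by (rule rel_any[OF assms(1) s])
  note m2 = this
  show ?thesis using rel_I[OF _ _ s m2] ab assms(2,3) by simp
qed
lemma comp3: assumes "rel c c'" "a\<in>H" "b\<in>H" shows "rel (h a b c) (h a b c')"
proof -
  obtain s where s: "s\<in>S" using Sne by blast
  have sH: "s\<in>H" using s SH by blast
  have ab: "c\<in>H" "c'\<in>H" using rel_H assms by auto
  have mem: "h (h (h a b s) s (h c c' s)) (h a b s) s \<in> S"
    by (rule Snorm[OF cl[OF assms(2,3) sH] s rel_any[OF assms(1) s]])
  have eq: "h (h (h a b s) s (h c c' s)) (h a b s) s = h (h a b c) (h a b c') s"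
    using ab assms(2,3) sH by (simp add: norm)
  have "h (h a b c) (h a b c') s \<in> S" using mem unfolding eq .
  note m2 = this
  show ?thesis using rel_I[OF _ _ s m2] ab assms(2,3) by simp
qed
lemma comp2: assumes "rel b b'" "a\<in>H" "c\<in>H" shows "rel (h a b c) (h a b' c)"
proof -
  obtain s where s: "s\<in>S" using Sne by blast
  have sH: "s\<in>H" using s SH by blast
  have ab: "b\<in>H" "b'\<in>H" using rel_H assms by auto
  have mem: "h (h (h a b s) s (h b' b s)) (h a b s) s \<in> S"
    by (rule Snorm[OF cl[OF assms(2) ab(1) sH] s rel_any[OF rel_sym[OF assms(1)] s]])
  have eq: "h (h (h a b s) s (h b' b s)) (h a b s) s = h (h a b c) (h a b' c) s"
    using ab assms(2,3) sH by (simp add: norm)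
  have "h (h a b c) (h a b' c) s \<in> S" using mem unfolding eq .
  note m2 = this
  show ?thesis using rel_I[OF _ _ s m2] ab assms(2,3) by simp
qed
lemma comp: assumes "rel a a'" "rel b b'" "rel c c'" shows "rel (h a b c) (h a' b' c')"
proof -
  have H: "a\<in>H" "a'\<in>H" "b\<in>H" "b'\<in>H" "c\<in>H" "c'\<in>H" using rel_H assms by auto
  have 1: "rel (h a b c) (h a' b c)" using comp1[OF assms(1)] H by simp
  have 2: "rel (h a' b c) (h a' b' c)" using comp2[OF assms(2)] H by simp
  have 3: "rel (h a' b' c) (h a' b' c')" using comp3[OF assms(3)] H by simp
  show ?thesis using rel_trans[OF rel_trans[OF 1 2] 3] .
qed
end

theorem theorem3p14:
  fixes T :: "'a set" and h :: "'a \<Rightarrow> 'a \<Rightarrow> 'a \<Rightarrow> 'a" and m :: "'a \<Rightarrow> 'a \<Rightarrow> 'a"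
    and P :: "'a set"
  assumes "pre_truss T h m"
    and "normal_sub_heap T h P"
  shows "(\<exists>\<mu>. pre_truss (quot T h P) (quot_op T h P) \<mu> \<and>
              pre_truss_hom T h m (quot T h P) (quot_op T h P) \<mu> (canon T h P))
         \<longleftrightarrow> paragon T h m P"
proof -
  interpret nsh T h P using assms unfolding pre_truss_def by unfold_locales auto
  have mcl: "a\<in>T \<Longrightarrow> b\<in>T \<Longrightarrow> m a b \<in> T" for a b using assms(1) unfolding pre_truss_def by blast
  have massoc: "a\<in>T \<Longrightarrow> b\<in>T \<Longrightarrow> c\<in>T \<Longrightarrow> m (m a b) c = m a (m b c)" for a b c
    using assms(1) unfolding pre_truss_def by blast
  let ?c = "canon T h P"
  have some: "rel a (SOME x. x \<in> ?c a)" if "a\<in>T" for a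
    using someI[of "\<lambda>x. x \<in> ?c a" a] rel_refl[OF that] unfolding mem_canon by blast
  have qop: "quot_op T h P (?c a) (?c b) (?c c) = ?c (h a b c)" if "a\<in>T" "b\<in>T" "c\<in>T" for a b c
    unfolding quot_op_def
    by (intro canon_eq comp rel_sym[OF some] that)
  have heapq: "heap (quot T h P) (quot_op T h P)"
    unfolding heap_def quot_def
  proof (intro conjI ballI)
    fix X Y Z assume "X \<in> ?c ` T" "Y \<in> ?c ` T" "Z \<in> ?c ` T"
    then obtain a b c where "a\<in>T" "b\<in>T" "c\<in>T" "X = ?c a" "Y = ?c b" "Z = ?c c" by blast
    then show "quot_op T h P X Y Z \<in> ?c ` T" using qop by simp
  next
    fix X Y Z U V assume "X \<in> ?c ` T" "Y \<in> ?c ` T" "Z \<in> ?c ` T" "U \<in> ?c ` T" "V \<in> ?c ` T"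
    then obtain a b c d e where "a\<in>T" "b\<in>T" "c\<in>T" "d\<in>T" "e\<in>T" "X = ?c a" "Y = ?c b" "Z = ?c c" "U = ?c d" "V = ?c e" by blast
    then show "quot_op T h P X Y (quot_op T h P Z U V) = quot_op T h P (quot_op T h P X Y Z) U V"
      using qop by (simp add: as)
  next
    fix X Y assume "X \<in> ?c ` T" "Y \<in> ?c ` T"
    then obtain a b where "a\<in>T" "b\<in>T" "X = ?c a" "Y = ?c b" by blast
    then show "quot_op T h P X X Y = Y" "quot_op T h P Y X X = Y" using qop by simp_all
  qed
  show ?thesis
  proof
    assume "\<exists>\<mu>. pre_truss (quot T h P) (quot_op T h P) \<mu> \<and>
              pre_truss_hom T h m (quot T h P) (quot_op T h P) \<mu> (canon T h P)"
    then obtain \<mu> where hom: "\<And>a b. a\<in>T \<Longrightarrow> b\<in>T \<Longrightarrow> ?c (m a b) = \<mu> (?c a) (?c b)"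
      unfolding pre_truss_hom_def by blast
    have ml: "rel (m t a) (m t a')" if "rel a a'" "t\<in>T" for t a a'
    proof -
      have "a\<in>T" "a'\<in>T" using that rel_H by auto
      then have "?c (m t a) = ?c (m t a')" using hom that canon_eq by metis
      then show ?thesis using canon_eq_iff mcl that \<open>a\<in>T\<close> by blast
    qed
    have mr: "rel (m a t) (m a' t)" if "rel a a'" "t\<in>T" for t a a'
    proof -
      have "a\<in>T" "a'\<in>T" using that rel_H by auto
      then have "?c (m a t) = ?c (m a' t)" using hom that canon_eq by metis
      then show ?thesis using canon_eq_iff mcl that \<open>a\<in>T\<close> by blast
    qed
    show "paragon T h m P"
      unfolding paragon_def closed_sub_heap_def sub_heap_def left_closed_def right_closed_def
    proof (intro conjI ballI ns)
      fix a assume a: "a\<in>T"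
      show "?c a \<subseteq> T" unfolding canon_def by blast
      fix x y z assume "x \<in> ?c a" "y \<in> ?c a" "z \<in> ?c a"
      then have "rel (h a a a) (h x y z)" unfolding mem_canon by (intro comp)
      then show "h x y z \<in> ?c a" using a unfolding mem_canon by simp
    next
      fix a s s' t assume a: "a\<in>T" and s: "s \<in> ?c a" "s' \<in> ?c a" and t: "t\<in>T"
      have r: "rel a s" "rel a s'" using s unfolding mem_canon by auto
      have ss: "rel s' s" using rel_trans[OF rel_sym[OF r(2)] r(1)] .
      have sT: "s\<in>T" using r rel_H by auto
      have "rel (h (m t s') (m t s) s) (h (m t s) (m t s) s)"
        using ml[OF ss t] by (intro comp rel_refl mcl t sT)
      then have "rel (h (m t s') (m t s) s) s" using sT t mcl by simp
      then show "h (m t s') (m t s) s \<in> ?c a" unfolding mem_canon using rel_trans[OF r(1) rel_sym] by blast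
    next
      fix a s s' t assume a: "a\<in>T" and s: "s \<in> ?c a" "s' \<in> ?c a" and t: "t\<in>T"
      have r: "rel a s" "rel a s'" using s unfolding mem_canon by auto
      have ss: "rel s' s" using rel_trans[OF rel_sym[OF r(2)] r(1)] .
      have sT: "s\<in>T" using r rel_H by auto
      have "rel (h (m s' t) (m s t) s) (h (m s t) (m s t) s)"
        using mr[OF ss t] by (intro comp rel_refl mcl t sT)
      then have "rel (h (m s' t) (m s t) s) s" using sT t mcl by simp
      then show "h (m s' t) (m s t) s \<in> ?c a" unfolding mem_canon using rel_trans[OF r(1) rel_sym] by blast
    qed
  next
    assume par: "paragon T h m P"
    have ml: "rel (m t a) (m t a')" if "rel a a'" "t\<in>T" for t a a'
    proof -
      have aT: "a\<in>T" "a'\<in>T" using that rel_H by auto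
      have "left_closed T h m (?c a)" using par aT unfolding paragon_def closed_sub_heap_def by blast
      moreover have "a \<in> ?c a" "a' \<in> ?c a" using that rel_refl aT unfolding mem_canon by auto
      ultimately have "h (m t a') (m t a) a \<in> ?c a" using that unfolding left_closed_def by blast
      then obtain s where s: "s\<in>P" "h a (h (m t a') (m t a) a) s \<in> P" unfolding mem_canon sh_rel_def by blast
      moreover have "h a (h (m t a') (m t a) a) s = h (m t a) (m t a') s"
        using aT s that mcl SH' by (simp add: norm)
      ultimately show ?thesis using aT that mcl by (metis rel_I)
    qed
    have mr: "rel (m a t) (m a' t)" if "rel a a'" "t\<in>T" for t a a'
    proof -
      have aT: "a\<in>T" "a'\<in>T" using that rel_H by auto
      have "right_closed T h m (?c a)" using par aT unfolding paragon_def closed_sub_heap_def by blast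
      moreover have "a \<in> ?c a" "a' \<in> ?c a" using that rel_refl aT unfolding mem_canon by auto
      ultimately have "h (m a' t) (m a t) a \<in> ?c a" using that unfolding right_closed_def by blast
      then obtain s where s: "s\<in>P" "h a (h (m a' t) (m a t) a) s \<in> P" unfolding mem_canon sh_rel_def by blast
      moreover have "h a (h (m a' t) (m a t) a) s = h (m a t) (m a' t) s"
        using aT s that mcl SH' by (simp add: norm)
      ultimately show ?thesis using aT that mcl by (metis rel_I)
    qed
    have mc: "rel (m a b) (m a' b')" if "rel a a'" "rel b b'" for a a' b b'
    proof -
      have "a\<in>T" "a'\<in>T" "b\<in>T" "b'\<in>T" using that rel_H by auto
      then show ?thesis using rel_trans[OF mr[OF that(1)] ml[OF that(2)]] by blast
    qed
    define \<mu> where "\<mu> X Y = ?c (m (SOME x. x\<in>X) (SOME y. y\<in>Y))" for X Y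
    have mu: "\<mu> (?c a) (?c b) = ?c (m a b)" if "a\<in>T" "b\<in>T" for a b
      unfolding \<mu>_def
      by (intro canon_eq mc rel_sym[OF some] that)
    have "pre_truss (quot T h P) (quot_op T h P) \<mu>"
      unfolding pre_truss_def
    proof (intro conjI ballI heapq)
      fix X Y assume "X \<in> quot T h P" "Y \<in> quot T h P"
      then obtain a b where "a\<in>T" "b\<in>T" "X = ?c a" "Y = ?c b" unfolding quot_def by blast
      then show "\<mu> X Y \<in> quot T h P" using mu mcl unfolding quot_def by simp
    next
      fix X Y Z assume "X \<in> quot T h P" "Y \<in> quot T h P" "Z \<in> quot T h P"
      then obtain a b c where "a\<in>T" "b\<in>T" "c\<in>T" "X = ?c a" "Y = ?c b" "Z = ?c c" unfolding quot_def by blast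
      then show "\<mu> (\<mu> X Y) Z = \<mu> X (\<mu> Y Z)" using mu mcl massoc by simp
    qed
    moreover have "pre_truss_hom T h m (quot T h P) (quot_op T h P) \<mu> (canon T h P)"
      unfolding pre_truss_hom_def heap_hom_def quot_def using mu qop by auto
    ultimately show "\<exists>\<mu>. pre_truss (quot T h P) (quot_op T h P) \<mu> \<and>
              pre_truss_hom T h m (quot T h P) (quot_op T h P) \<mu> (canon T h P)" by blast
  qed
qed
end
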